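(* Let $N\geq1$ and let $|\psi_N\rangle=\sum_{k=1}^{D}|x_k\rangle^{\otimes N}\in\mathrm{Sym}_N$ with $|x_k\rangle\in\mathbb{C}^2$, where $D=D(\psi_N)$ is the optimal bond dimension of $|\psi_N\rangle$, and assume $D(\psi_N)\leq\lfloor N/2\rfloor+1$. Then the $(N+1)$-qubit state $|\psi_{N+1}\rangle=\sum_{k=1}^{D}|x_k\rangle^{\otimes(N+1)}$ is nonzero and has optimal bond dimension $D(\psi_{N+1})=D(\psi_N)$.
   Context: The one-qubit space is $\mathbb{C}^2$ with standard basis $\{|0\rangle,|1\rangle\}$. For $N\geq1$, $\mathrm{Sym}_N\subset(\mathbb{C}^2)^{\otimes N}$ denotes the symmetric subspace, i.e. the vectors invariant under every permutation of the $N$ tensor factors; it has dimension $N+1$. For a nonzero $|\psi\rangle\in\mathrm{Sym}_N$, the optimal bond dimension $D(\psi)$ is the minimal integer $D\geq1$ such that $|\psi\rangle=\sum_{k=1}^D|x_k\rangle^{\otimes N}$ for some (not necessarily normalized) vectors $|x_k\rangle\in\mathbb{C}^2$. *)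

theory Defs
  imports Complex_Main "HOL-Combinatorics.Permutations"
begin

text \<open>A vector of C^2 is a function bool => complex (False = |0>, True = |1>).
 A vector of (C^2)^{\<otimes>N} is a function on bit strings, bool list => complex,
 supported on strings of length N (coefficients in the computational basis).\<close>

definition qvec :: "nat \<Rightarrow> (bool list \<Rightarrow> complex) \<Rightarrow> bool" where
  "qvec N \<psi> \<longleftrightarrow> (\<forall>bs. length bs \<noteq> N \<longrightarrow> \<psi> bs = 0)"

definition Sym :: "nat \<Rightarrow> (bool list \<Rightarrow> complex) set" where
  "Sym N = {\<psi>. qvec N \<psi> \<and>
     (\<forall>(p::nat \<Rightarrow> nat) bs. p permutes {..<N} \<longrightarrow> length bs = N \<longrightarrow>
        \<psi> (map (\<lambda>i. bs ! p i) [0..<N]) = \<psi> bs)}"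

definition tpow :: "nat \<Rightarrow> (bool \<Rightarrow> complex) \<Rightarrow> bool list \<Rightarrow> complex" where
  "tpow N x = (\<lambda>bs. if length bs = N then prod_list (map x bs) else 0)"

definition has_decomp :: "nat \<Rightarrow> (bool list \<Rightarrow> complex) \<Rightarrow> nat \<Rightarrow> bool" where
  "has_decomp N \<psi> D \<longleftrightarrow>
     (\<exists>xs :: nat \<Rightarrow> bool \<Rightarrow> complex. \<psi> = (\<lambda>bs. \<Sum>k\<in>{1..D}. tpow N (xs k) bs))"

definition bond_dim :: "nat \<Rightarrow> (bool list \<Rightarrow> complex) \<Rightarrow> nat" where
  "bond_dim N \<psi> = (LEAST D. D \<ge> 1 \<and> has_decomp N \<psi> D)"

end

theory Submission
  imports Defs
begin

lemma ex_root: "n \<ge> 1 \<Longrightarrow> \<exists>r::complex. r ^ n = w"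
proof -
  assume n: "n \<ge> 1"
  have "rcis (root n (cmod w)) (Arg w / real n) ^ n = w"
    using n by (simp add: DeMoivre2 real_root_pow_pos2 rcis_cmod_Arg)
  then show ?thesis by blast
qed

lemma prod_list_scale: "prod_list (map (\<lambda>v. (c::complex) * f v) bs) = c ^ length bs * prod_list (map f bs)"
  by (induction bs) (auto simp: mult_ac)

lemma tpow_scale: "tpow n (\<lambda>v. c * f v) bs = c ^ n * tpow n f bs"
  unfolding tpow_def by (simp add: prod_list_scale)

lemma tpow_zero: "n \<ge> 1 \<Longrightarrow> tpow n (\<lambda>_. 0) bs = 0"
  unfolding tpow_def by (auto simp: map_replicate_const prod_list_replicate)

definition bsm :: "nat \<Rightarrow> nat \<Rightarrow> bool list" where
  "bsm n m = replicate (n - m) False @ replicate m True"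

lemma tpow_bsm: "m \<le> n \<Longrightarrow> tpow n f (bsm n m) = f False ^ (n - m) * f True ^ m"
  unfolding tpow_def bsm_def by (simp add: prod_list_replicate)

lemma sep:
  fixes a b c :: "'i \<Rightarrow> complex"
  assumes "finite I" "i0 \<in> I" "card I \<le> n + 1" "a i0 \<noteq> 0 \<or> b i0 \<noteq> 0"
    "\<forall>i\<in>I-{i0}. a i0 * b i \<noteq> a i * b i0"
    "\<forall>m\<le>n. (\<Sum>i\<in>I. c i * a i ^ (n - m) * b i ^ m) = 0"
  shows "c i0 = 0"
  using assms
proof (induction n arbitrary: I c)
  have single: "c i0 = 0" if "I = {i0}" "a i0 \<noteq> 0 \<or> b i0 \<noteq> 0"
     "\<forall>m\<le>n. (\<Sum>i\<in>I. c i * a i ^ (n - m) * b i ^ m) = 0" for I c and n :: nat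
  proof -
    from that have "c i0 * a i0 ^ n = 0" "c i0 * b i0 ^ n = 0"
      by (auto dest: spec[of _ 0] spec[of _ n])
    with that(2) show ?thesis by auto
  qed
  {
    case 0
    have "I = {i0}"
    proof (rule ccontr)
      assume "I \<noteq> {i0}"
      then obtain i where "i \<in> I" "i \<noteq> i0" using 0 by blast
      then have "card {i0, i} \<le> card I" using 0 by (intro card_mono) auto
      with \<open>i \<noteq> i0\<close> 0 show False by simp
    qed
    with single 0 show ?case by blast
  next
    case (Suc n)
    show ?case
    proof (cases "I = {i0}")
      case True
      with single Suc.prems show ?thesis by blast
    next
      case False
      then obtain i1 where i1: "i1 \<in> I" "i1 \<noteq> i0" using Suc.prems by blast
      define c' where "c' i = c i * (b i1 * a i - a i1 * b i)" for i
      have card': "card (I - {i1}) \<le> n + 1" using Suc.prems i1 by simp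
      have rel: "\<forall>m\<le>n. (\<Sum>i\<in>I - {i1}. c' i * a i ^ (n - m) * b i ^ m) = 0"
      proof (intro allI impI)
        fix m assume m: "m \<le> n"
        have "(\<Sum>i\<in>I. c' i * a i ^ (n - m) * b i ^ m)
            = b i1 * (\<Sum>i\<in>I. c i * a i ^ (Suc n - m) * b i ^ m)
              - a i1 * (\<Sum>i\<in>I. c i * a i ^ (Suc n - Suc m) * b i ^ Suc m)"
          unfolding sum_distrib_left sum_subtractf[symmetric]
          by (rule sum.cong) (use m in \<open>auto simp: c'_def Suc_diff_le algebra_simps\<close>)
        also have "\<dots> = 0"
        proof -
          have "(\<Sum>i\<in>I. c i * a i ^ (Suc n - m) * b i ^ m) = 0"
            using Suc.prems(6)[rule_format, of m] m by simp
          moreover have "(\<Sum>i\<in>I. c i * a i ^ (Suc n - Suc m) * b i ^ Suc m) = 0"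
            using Suc.prems(6)[rule_format, of "Suc m"] m by simp
          ultimately show ?thesis by simp
        qed
        finally have "(\<Sum>i\<in>I. c' i * a i ^ (n - m) * b i ^ m) = 0" .
        moreover have "(\<Sum>i\<in>I. c' i * a i ^ (n - m) * b i ^ m)
           = c' i1 * a i1 ^ (n - m) * b i1 ^ m + (\<Sum>i\<in>I - {i1}. c' i * a i ^ (n - m) * b i ^ m)"
          using Suc.prems(1) i1 by (simp add: sum.remove)
        moreover have "c' i1 = 0" by (simp add: c'_def mult.commute)
        ultimately show "(\<Sum>i\<in>I - {i1}. c' i * a i ^ (n - m) * b i ^ m) = 0" by simp
      qed
      have "c' i0 = 0"
        by (rule Suc.IH) (use Suc.prems i1 card' rel in auto)
      moreover have "b i1 * a i0 - a i1 * b i0 \<noteq> 0"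
        using Suc.prems(5) i1 by (auto simp: mult.commute)
      ultimately show ?thesis by (simp add: c'_def)
    qed
  }
qed


lemma atLeastAtMost_insert_top: "(D::nat) \<ge> 1 \<Longrightarrow> {1..D} = insert D {1..D-1}"
  by auto

lemma decomp_drop:
  assumes "n \<ge> 1" "j \<in> {1..D}" "x j = (\<lambda>_. 0)"
  shows "has_decomp n (\<lambda>bs. \<Sum>k\<in>{1..D}. tpow n (x k) bs) (D-1)"
proof -
  define y where "y k = (if k = j then x D else x k)" for k
  have D1: "D \<ge> 1" using assms by auto
  have z: "tpow n (x j) bs = 0" for bs using assms by (simp add: tpow_zero)
  show ?thesis unfolding has_decomp_def
  proof (intro exI[of _ y] ext)
    fix bs
    have eq: "(\<Sum>k\<in>{1..D}. tpow n (x k) bs) = tpow n (x D) bs + (\<Sum>k\<in>{1..D-1}. tpow n (x k) bs)"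
      using D1 by (subst atLeastAtMost_insert_top) auto
    show "(\<Sum>k\<in>{1..D}. tpow n (x k) bs) = (\<Sum>k\<in>{1..D-1}. tpow n (y k) bs)"
    proof (cases "j = D")
      case True
      then have "(\<Sum>k\<in>{1..D-1}. tpow n (y k) bs) = (\<Sum>k\<in>{1..D-1}. tpow n (x k) bs)"
        by (intro sum.cong) (auto simp: y_def)
      with eq z True show ?thesis by simp
    next
      case False
      then have j: "j \<in> {1..D-1}" using assms by auto
      have "(\<Sum>k\<in>{1..D-1}. tpow n (y k) bs) = tpow n (y j) bs + (\<Sum>k\<in>{1..D-1}-{j}. tpow n (y k) bs)"
        using j by (simp add: sum.remove)
      also have "(\<Sum>k\<in>{1..D-1}-{j}. tpow n (y k) bs) = (\<Sum>k\<in>{1..D-1}-{j}. tpow n (x k) bs)"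
        by (intro sum.cong) (auto simp: y_def)
      also have "(\<Sum>k\<in>{1..D-1}. tpow n (x k) bs) = tpow n (x j) bs + (\<Sum>k\<in>{1..D-1}-{j}. tpow n (x k) bs)"
        using j by (simp add: sum.remove)
      ultimately show ?thesis using eq z by (simp add: y_def)
    qed
  qed
qed

lemma sum_two:
  assumes "finite K" "i \<in> K" "j \<in> K" "i \<noteq> j"
  shows "sum g K = g i + g j + sum g (K - {i, j})"
proof -
  have "sum g K = g i + sum g (K - {i})" using assms by (simp add: sum.remove)
  also have "sum g (K - {i}) = g j + sum g (K - {i} - {j})"
    using assms by (intro sum.remove) auto
  also have "K - {i} - {j} = K - {i,j}" by auto
  finally show ?thesis by (simp add: add.assoc)
qed

lemma decomp_merge:
  assumes "n \<ge> 1" "i \<in> {1..D}" "j \<in> {1..D}" "i \<noteq> j" "x j = (\<lambda>v. t * x i v)"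
  shows "has_decomp n (\<lambda>bs. \<Sum>k\<in>{1..D}. tpow n (x k) bs) (D-1)"
proof -
  obtain r :: complex where r: "r ^ n = 1 + t ^ n" using ex_root assms(1) by blast
  define x' where "x' = x(i := (\<lambda>v. r * x i v), j := (\<lambda>_. 0))"
  have "(\<lambda>bs. \<Sum>k\<in>{1..D}. tpow n (x k) bs) = (\<lambda>bs. \<Sum>k\<in>{1..D}. tpow n (x' k) bs)"
  proof
    fix bs
    have "(\<Sum>k\<in>{1..D}. tpow n (x k) bs) = tpow n (x i) bs + tpow n (x j) bs + (\<Sum>k\<in>{1..D}-{i,j}. tpow n (x k) bs)"
      using assms by (intro sum_two) auto
    moreover have "(\<Sum>k\<in>{1..D}. tpow n (x' k) bs) = tpow n (x' i) bs + tpow n (x' j) bs + (\<Sum>k\<in>{1..D}-{i,j}. tpow n (x' k) bs)"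
      using assms by (intro sum_two) auto
    moreover have "(\<Sum>k\<in>{1..D}-{i,j}. tpow n (x' k) bs) = (\<Sum>k\<in>{1..D}-{i,j}. tpow n (x k) bs)"
      by (intro sum.cong) (auto simp: x'_def)
    moreover have "tpow n (x' i) bs + tpow n (x' j) bs = tpow n (x i) bs + tpow n (x j) bs"
      using assms r by (simp add: x'_def tpow_scale tpow_zero algebra_simps)
    ultimately show "(\<Sum>k\<in>{1..D}. tpow n (x k) bs) = (\<Sum>k\<in>{1..D}. tpow n (x' k) bs)" by simp
  qed
  moreover have "has_decomp n (\<lambda>bs. \<Sum>k\<in>{1..D}. tpow n (x' k) bs) (D-1)"
    using assms by (intro decomp_drop[of n j D x']) (auto simp: x'_def)
  ultimately show ?thesis by simp
qed

lemma prop_scale: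
  fixes u w :: "bool \<Rightarrow> complex"
  assumes "u False \<noteq> 0 \<or> u True \<noteq> 0" "u False * w True = w False * u True"
  shows "\<exists>t. w = (\<lambda>v. t * u v)"
proof (cases "u False = 0")
  case False
  show ?thesis
  proof (intro exI ext)
    fix v show "w v = w False / u False * u v"
      using False assms(2) by (cases v) (auto simp: field_simps)
  qed
next
  case True
  then have ut: "u True \<noteq> 0" using assms by auto
  show ?thesis
  proof (intro exI ext)
    fix v show "w v = w True / u True * u v"
      using True ut assms(2) by (cases v) (auto simp: field_simps)
  qed
qed

lemma bond_reduced:
  assumes n: "n \<ge> 1" and psi: "\<psi> = (\<lambda>bs. \<Sum>k\<in>{1..D}. tpow n (x k) bs)"
    and nz: "\<psi> \<noteq> (\<lambda>_. 0)" and D: "D = bond_dim n \<psi>"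
  shows "D \<ge> 1" "\<forall>k\<in>{1..D}. x k False \<noteq> 0 \<or> x k True \<noteq> 0"
    "\<forall>i\<in>{1..D}. \<forall>j\<in>{1..D}. i \<noteq> j \<longrightarrow> x i False * x j True \<noteq> x j False * x i True"
proof -
  show D1: "D \<ge> 1"
  proof (rule ccontr)
    assume "\<not> D \<ge> 1" then have "D = 0" by simp
    then show False using nz psi by simp
  qed
  have noD: "\<not> has_decomp n \<psi> (D-1)"
  proof
    assume h: "has_decomp n \<psi> (D-1)"
    show False
    proof (cases "D - 1 = 0")
      case True
      from h obtain xs where "\<psi> = (\<lambda>bs. \<Sum>k\<in>{1..D-1}. tpow n (xs k) bs)"
        unfolding has_decomp_def by blast
      then have "\<psi> = (\<lambda>_. 0)" using True by simp
      with nz show False by simp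
    next
      case False
      then have "bond_dim n \<psi> \<le> D - 1" unfolding bond_dim_def
        using h by (intro Least_le) simp
      with D D1 show False by simp
    qed
  qed
  show nzk: "\<forall>k\<in>{1..D}. x k False \<noteq> 0 \<or> x k True \<noteq> 0"
  proof (intro ballI, rule ccontr)
    fix k assume k: "k \<in> {1..D}" and a: "\<not> (x k False \<noteq> 0 \<or> x k True \<noteq> 0)"
    have xk: "x k = (\<lambda>_. 0)"
    proof
      fix v show "x k v = 0" using a by (cases v) auto
    qed
    have "has_decomp n \<psi> (D-1)" unfolding psi by (rule decomp_drop[of n k D x, OF n k xk])
    with noD show False by simp
  qed
  show "\<forall>i\<in>{1..D}. \<forall>j\<in>{1..D}. i \<noteq> j \<longrightarrow> x i False * x j True \<noteq> x j False * x i True"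
  proof (intro ballI impI notI)
    fix i j assume ij: "i \<in> {1..D}" "j \<in> {1..D}" "i \<noteq> j"
      and e: "x i False * x j True = x j False * x i True"
    obtain t where "x j = (\<lambda>v. t * x i v)" using prop_scale[OF _ e] nzk ij by blast
    then have "has_decomp n \<psi> (D-1)" unfolding psi by (rule decomp_merge[of n i D j x t, OF n ij])
    with noD show False by simp
  qed
qed

lemma collinear:
  fixes a1 b1 a2 b2 aj bj :: complex
  assumes "aj \<noteq> 0 \<or> bj \<noteq> 0" "a1 * bj = aj * b1" "a2 * bj = aj * b2"
  shows "a1 * b2 = a2 * b1"
proof (cases "aj = 0")
  case False
  have "aj * (a1 * b2) = a1 * (aj * b2)" by (simp add: mult_ac)
  also have "\<dots> = a1 * (a2 * bj)" using assms(3) by simp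
  also have "\<dots> = a2 * (a1 * bj)" by (simp add: mult_ac)
  also have "\<dots> = a2 * (aj * b1)" using assms(2) by simp
  also have "\<dots> = aj * (a2 * b1)" by (simp add: mult_ac)
  finally have "aj * (a1 * b2) = aj * (a2 * b1)" .
  with False show ?thesis by simp
next
  case True
  then have "bj \<noteq> 0" using assms by simp
  have "bj * (a1 * b2) = b2 * (a1 * bj)" by (simp add: mult_ac)
  also have "\<dots> = b2 * (aj * b1)" using assms(2) by simp
  also have "\<dots> = b1 * (aj * b2)" by (simp add: mult_ac)
  also have "\<dots> = b1 * (a2 * bj)" using assms(3) by simp
  also have "\<dots> = bj * (a2 * b1)" by (simp add: mult_ac)
  finally have "bj * (a1 * b2) = bj * (a2 * b1)" .
  with \<open>bj \<noteq> 0\<close> show ?thesis by simp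
qed


theorem theorem2:
  fixes N D :: nat and x :: "nat \<Rightarrow> bool \<Rightarrow> complex"
    and \<psi> \<psi>' :: "bool list \<Rightarrow> complex"
  assumes "N \<ge> 1"
    and "\<psi> = (\<lambda>bs. \<Sum>k\<in>{1..D}. tpow N (x k) bs)"
    and "\<psi> \<in> Sym N"
    and "\<psi> \<noteq> (\<lambda>_. 0)"
    and "D = bond_dim N \<psi>"
    and "bond_dim N \<psi> \<le> N div 2 + 1"
    and "\<psi>' = (\<lambda>bs. \<Sum>k\<in>{1..D}. tpow (N + 1) (x k) bs)"
  shows "\<psi>' \<noteq> (\<lambda>_. 0) \<and> bond_dim (N + 1) \<psi>' = bond_dim N \<psi>"
proof -
  have N1: "N + 1 \<ge> 1" by simp
  note red = bond_reduced[OF assms(1) assms(2) assms(4) assms(5)]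
  have D1: "D \<ge> 1" using red(1) .
  have nzx: "\<forall>k\<in>{1..D}. x k False \<noteq> 0 \<or> x k True \<noteq> 0" using red(2) .
  have prx: "\<forall>i\<in>{1..D}. \<forall>j\<in>{1..D}. i \<noteq> j \<longrightarrow> x i False * x j True \<noteq> x j False * x i True"
    using red(3) .
  have Dle: "D \<le> N div 2 + 1" using assms(5,6) by simp
  have psi'_bsm: "\<psi>' (bsm (N+1) m) = (\<Sum>k\<in>{1..D}. x k False ^ (N + 1 - m) * x k True ^ m)"
    if "m \<le> N + 1" for m
    using that by (simp add: assms(7) tpow_bsm)
  have nz': "\<psi>' \<noteq> (\<lambda>_. 0)"
  proof
    assume h: "\<psi>' = (\<lambda>_. 0)"
    have "(\<lambda>_. 1::complex) (1::nat) = 0"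
    proof (rule sep[where I="{1..D}" and n="N+1" and a="\<lambda>k. x k False" and b="\<lambda>k. x k True"])
      show "card {1..D} \<le> N + 1 + 1" using Dle by simp
      show "\<forall>m\<le>N + 1. (\<Sum>i\<in>{1..D}. 1 * x i False ^ (N + 1 - m) * x i True ^ m) = 0"
      proof (intro allI impI)
        fix m assume m: "m \<le> N + 1"
        have "\<psi>' (bsm (N+1) m) = 0" using h by simp
        then show "(\<Sum>i\<in>{1..D}. 1 * x i False ^ (N + 1 - m) * x i True ^ m) = 0"
          using psi'_bsm[OF m] by simp
      qed
      show "finite {1..D}" by simp
      show "1 \<in> {1..D}" using D1 by simp
      show "x 1 False \<noteq> 0 \<or> x 1 True \<noteq> 0" using nzx D1 by simp
      show "\<forall>i\<in>{1..D}-{1}. x 1 False * x i True \<noteq> x i False * x 1 True"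
      proof
        fix i assume i: "i \<in> {1..D}-{1}"
        show "x 1 False * x i True \<noteq> x i False * x 1 True"
          using prx[rule_format, of 1 i] i D1 by simp
      qed
    qed
    then show False by simp
  qed
  define D' where "D' = bond_dim (N+1) \<psi>'"
  have hdD: "has_decomp (N+1) \<psi>' D" using assms(7) unfolding has_decomp_def by blast
  have D'P: "D' \<ge> 1 \<and> has_decomp (N+1) \<psi>' D'" unfolding D'_def bond_dim_def
    by (rule LeastI[of _ D]) (use D1 hdD in auto)
  have D'le: "D' \<le> D" unfolding D'_def bond_dim_def
    by (rule Least_le) (use D1 hdD in auto)
  obtain y where y: "\<psi>' = (\<lambda>bs. \<Sum>j\<in>{1..D'}. tpow (N+1) (y j) bs)"
    using D'P unfolding has_decomp_def by blast
  have nzy: "\<forall>k\<in>{1..D'}. y k False \<noteq> 0 \<or> y k True \<noteq> 0"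
    using bond_reduced(2)[OF N1 y nz' D'_def] .
  have psi'_bsm_y: "\<psi>' (bsm (N+1) m) = (\<Sum>j\<in>{1..D'}. y j False ^ (N + 1 - m) * y j True ^ m)"
    if "m \<le> N + 1" for m
    using that by (simp add: y tpow_bsm)
  have "\<not> D' < D"
  proof
    assume lt: "D' < D"
    show False
    proof (cases "\<exists>k0\<in>{1..D}. \<forall>j\<in>{1..D'}. x k0 False * y j True \<noteq> y j False * x k0 True")
      case True
      then obtain k0 where k0: "k0 \<in> {1..D}"
        and k0y: "\<forall>j\<in>{1..D'}. x k0 False * y j True \<noteq> y j False * x k0 True" by blast
      define I :: "(nat + nat) set" where "I = Inl ` {1..D} \<union> Inr ` {1..D'}"
      define A :: "nat + nat \<Rightarrow> complex" where "A = case_sum (\<lambda>k. x k False) (\<lambda>j. y j False)"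
      define B :: "nat + nat \<Rightarrow> complex" where "B = case_sum (\<lambda>k. x k True) (\<lambda>j. y j True)"
      define C :: "nat + nat \<Rightarrow> complex" where "C = case_sum (\<lambda>_. 1) (\<lambda>_. -1)"
      have sumI: "(\<Sum>i\<in>I. f i) = (\<Sum>k\<in>{1..D}. f (Inl k)) + (\<Sum>j\<in>{1..D'}. f (Inr j))"
        for f :: "nat + nat \<Rightarrow> complex"
        unfolding I_def by (subst sum.union_disjoint) (auto simp: sum.reindex)
      have cardI: "card I = D + D'"
        unfolding I_def by (subst card_Un_disjoint) (auto simp: card_image)
      have "C (Inl k0) = 0"
      proof (rule sep[where I=I and n="N+1" and a=A and b=B])
        show "finite I" unfolding I_def by simp
        show "Inl k0 \<in> I" unfolding I_def using k0 by simp
        show "card I \<le> N + 1 + 1" unfolding cardI using lt Dle by presburger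
        show "A (Inl k0) \<noteq> 0 \<or> B (Inl k0) \<noteq> 0" using nzx k0 by (simp add: A_def B_def)
        show "\<forall>i\<in>I - {Inl k0}. A (Inl k0) * B i \<noteq> A i * B (Inl k0)"
        proof
          fix i assume i: "i \<in> I - {Inl k0}"
          show "A (Inl k0) * B i \<noteq> A i * B (Inl k0)"
          proof (cases i)
            case (Inl k)
            then have k: "k \<in> {1..D}" "k \<noteq> k0" using i unfolding I_def by auto
            show ?thesis using prx[rule_format, of k0 k] k k0 Inl by (simp add: A_def B_def)
          next
            case (Inr j)
            then have j: "j \<in> {1..D'}" using i unfolding I_def by auto
            show ?thesis using k0y[rule_format, of j] j Inr by (simp add: A_def B_def)
          qed
        qed
        show "\<forall>m\<le>N + 1. (\<Sum>i\<in>I. C i * A i ^ (N + 1 - m) * B i ^ m) = 0"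
        proof (intro allI impI)
          fix m assume m: "m \<le> N + 1"
          show "(\<Sum>i\<in>I. C i * A i ^ (N + 1 - m) * B i ^ m) = 0"
            unfolding sumI using psi'_bsm[OF m] psi'_bsm_y[OF m]
            by (simp add: A_def B_def C_def sum_negf)
        qed
      qed
      then show False by (simp add: C_def)
    next
      case False
      then have ex: "\<forall>k\<in>{1..D}. \<exists>j. j \<in> {1..D'} \<and> x k False * y j True = y j False * x k True"
        by blast
      define f where "f k = (SOME j. j \<in> {1..D'} \<and> x k False * y j True = y j False * x k True)" for k
      have f: "f k \<in> {1..D'} \<and> x k False * y (f k) True = y (f k) False * x k True"
        if "k \<in> {1..D}" for k
        unfolding f_def by (rule someI_ex) (use ex that in blast)
      have "inj_on f {1..D}"
      proof (rule inj_onI)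
        fix k1 k2 assume k: "k1 \<in> {1..D}" "k2 \<in> {1..D}" "f k1 = f k2"
        show "k1 = k2"
        proof (rule ccontr)
          assume ne: "k1 \<noteq> k2"
          have "x k1 False * x k2 True = x k2 False * x k1 True"
          proof (rule collinear[where aj = "y (f k1) False" and bj = "y (f k1) True"])
            show "y (f k1) False \<noteq> 0 \<or> y (f k1) True \<noteq> 0" using nzy f[OF k(1)] by blast
            show "x k1 False * y (f k1) True = y (f k1) False * x k1 True" using f[OF k(1)] by blast
            show "x k2 False * y (f k1) True = y (f k1) False * x k2 True" using f[OF k(2)] k(3) by simp
          qed
          with prx k ne show False by blast
        qed
      qed
      then have "card {1..D} \<le> card {1..D'}" by (rule card_inj_on_le) (use f in auto)
      with lt show False by simp
    qed
  qed
  with D'le have "D' = D" by simp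
  then show ?thesis using nz' D'_def assms(5) by simp
qed

end
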